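(* Let $(V,\Omega)$ be a finite-dimensional real symplectic vector space and let $\theta^0$ be the one-form on $V$ given by $\theta^0_z(v_z)=\frac{1}{2}\Omega(z,v)$ for $z,v\in V$. Then the group ${\rm Aut}(V,\theta^0)$ of all diffeomorphisms $g:V\to V$ with $g^*\theta^0=\theta^0$ equals the linear symplectic group ${\rm Sp}(V,\Omega)$.
   Context: $V$ is a finite-dimensional real vector space and $\Omega$ is a nonsingular alternating bilinear form on $V$. For $z,v\in V$, $v_z\in T_zV$ denotes the tangent vector at $z$ corresponding to $v$ under the canonical identification $T_zV\cong V$ (i.e. $v_z\psi=\frac{d}{dt}\psi(z+tv)|_{t=0}$). For a smooth map $g:V\to V$ and a one-form $\theta$, $(g^*\theta)_z(v_z)=\theta_{g(z)}((g'_z v)_{g(z)})$, where $g'_z$ is the derivative of $g$ at $z$. ${\rm Sp}(V,\Omega)$ is the group of linear automorphisms $g$ of $V$ with $\Omega(gx,gy)=\Omega(x,y)$ for all $x,y\in V$. *)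

theory Defs
  imports "HOL-Analysis.Analysis"
begin

text \<open>C-infinity maps: F k x vs is the k-th derivative of f at x applied to the
  directions vs; each is (Frechet) differentiable in x with derivative given by the next one.\<close>
definition smooth_map :: "('a::real_normed_vector \<Rightarrow> 'b::real_normed_vector) \<Rightarrow> bool" where
  "smooth_map f \<longleftrightarrow> (\<exists>F :: nat \<Rightarrow> 'a \<Rightarrow> 'a list \<Rightarrow> 'b.
      (\<forall>x. F 0 x [] = f x) \<and>
      (\<forall>k vs x. length vs = k \<longrightarrow>
         ((\<lambda>y. F k y vs) has_derivative (\<lambda>v. F (Suc k) x (v # vs))) (at x)))"

definition diffeomorphism :: "('a::real_normed_vector \<Rightarrow> 'a) \<Rightarrow> bool" where
  "diffeomorphism g \<longleftrightarrow> bij g \<and> smooth_map g \<and> smooth_map (inv g)"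

definition symplectic_form :: "('a::real_vector \<Rightarrow> 'a \<Rightarrow> real) \<Rightarrow> bool" where
  "symplectic_form \<Omega> \<longleftrightarrow> bilinear \<Omega> \<and> (\<forall>x. \<Omega> x x = 0) \<and> (\<forall>x. (\<forall>y. \<Omega> x y = 0) \<longrightarrow> x = 0)"

text \<open>One-forms on V are represented as maps z v \<mapsto> theta_z(v_z).\<close>
definition theta0 :: "('a \<Rightarrow> 'a \<Rightarrow> real) \<Rightarrow> 'a \<Rightarrow> 'a \<Rightarrow> real" where
  "theta0 \<Omega> z v = (1/2) * \<Omega> z v"

definition pullback :: "('a::real_normed_vector \<Rightarrow> 'a) \<Rightarrow> ('a \<Rightarrow> 'a \<Rightarrow> real) \<Rightarrow> 'a \<Rightarrow> 'a \<Rightarrow> real" where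
  "pullback g \<theta> z v = \<theta> (g z) (frechet_derivative g (at z) v)"

definition Aut :: "('a::real_normed_vector \<Rightarrow> 'a \<Rightarrow> real) \<Rightarrow> ('a \<Rightarrow> 'a) set" where
  "Aut \<theta> = {g. diffeomorphism g \<and> pullback g \<theta> = \<theta>}"

definition Sp :: "('a::real_vector \<Rightarrow> 'a \<Rightarrow> real) \<Rightarrow> ('a \<Rightarrow> 'a) set" where
  "Sp \<Omega> = {g. linear g \<and> bij g \<and> (\<forall>x y. \<Omega> (g x) (g y) = \<Omega> x y)}"

end

theory Submission
  imports Defs
begin


lemma smooth_linear:
  fixes f :: "'a::euclidean_space \<Rightarrow> 'b::real_normed_vector"
  assumes "linear f" shows "smooth_map f"
proof -
  have bl: "bounded_linear f" using assms linear_conv_bounded_linear by blast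
  define F :: "nat \<Rightarrow> 'a \<Rightarrow> 'a list \<Rightarrow> 'b" where
    "F = (\<lambda>k x vs. case k of 0 \<Rightarrow> f x | Suc 0 \<Rightarrow> f (hd vs) | Suc (Suc _) \<Rightarrow> 0)"
  have "\<forall>k vs x. length vs = k \<longrightarrow>
         ((\<lambda>y. F k y vs) has_derivative (\<lambda>v. F (Suc k) x (v # vs))) (at x)"
  proof (intro allI impI)
    fix k :: nat and vs :: "'a list" and x :: 'a assume "length vs = k"
    show "((\<lambda>y. F k y vs) has_derivative (\<lambda>v. F (Suc k) x (v # vs))) (at x)"
    proof (cases k)
      case 0 then show ?thesis using bl by (simp add: F_def bounded_linear_imp_has_derivative)
    next
      case (Suc m) then show ?thesis by (cases m) (simp_all add: F_def)
    qed
  qed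
  moreover have "\<forall>x. F 0 x [] = f x" by (simp add: F_def)
  ultimately show ?thesis unfolding smooth_map_def by blast
qed

lemma Sp_sub:
  fixes \<Omega> :: "'a::euclidean_space \<Rightarrow> 'a \<Rightarrow> real"
  assumes "g \<in> Sp \<Omega>" shows "g \<in> Aut (theta0 \<Omega>)"
proof -
  have lin: "linear g" and b: "bij g" and sy: "\<And>x y. \<Omega> (g x) (g y) = \<Omega> x y"
    using assms by (auto simp: Sp_def)
  have "linear (inv g)"
    using lin b inj_linear_imp_inv_bounded_linear linear_conv_bounded_linear bij_is_inj by blast
  then have "diffeomorphism g" using b lin smooth_linear unfolding diffeomorphism_def by blast
  moreover have "frechet_derivative g (at z) = g" for z
    using frechet_derivative_at[OF linear_imp_has_derivative[OF lin]] by simp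
  then have "pullback g (theta0 \<Omega>) = theta0 \<Omega>"
    by (auto simp: pullback_def theta0_def sy fun_eq_iff)
  ultimately show ?thesis by (simp add: Aut_def)
qed


lemma schwarz_aux:
  fixes f :: "'a::real_normed_vector \<Rightarrow> real"
  assumes Df: "\<And>y. (f has_derivative Df y) (at y)"
  and lin: "linear Bv"
  and near: "\<And>y. norm (y - x) < d \<Longrightarrow> \<bar>Df y v - Df x v - Bv (y - x)\<bar> \<le> e * norm (y - x)"
  and h: "h > 0" "h * (norm u + norm v) < d" and e: "e \<ge> 0"
  shows "\<bar>f (x + h *\<^sub>R u + h *\<^sub>R v) - f (x + h *\<^sub>R u) - f (x + h *\<^sub>R v) + f x - h^2 * Bv u\<bar>
          \<le> e * h^2 * (norm u + 2 * norm v)"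
proof -
  define \<phi> where "\<phi> t = f (x + h *\<^sub>R u + t *\<^sub>R v) - f (x + t *\<^sub>R v)" for t
  have l1: "linear (Df y)" for y using Df has_derivative_linear by blast
  have der: "DERIV \<phi> t :> Df (x + h *\<^sub>R u + t *\<^sub>R v) v - Df (x + t *\<^sub>R v) v" for t
  proof -
    have A: "((\<lambda>t. f (x + h *\<^sub>R u + t *\<^sub>R v)) has_derivative (\<lambda>s. Df (x + h *\<^sub>R u + t *\<^sub>R v) (s *\<^sub>R v))) (at t)"
      by (rule has_derivative_compose[OF _ Df]) (auto intro!: derivative_eq_intros)
    have B: "((\<lambda>t. f (x + t *\<^sub>R v)) has_derivative (\<lambda>s. Df (x + t *\<^sub>R v) (s *\<^sub>R v))) (at t)"
      by (rule has_derivative_compose[OF _ Df]) (auto intro!: derivative_eq_intros)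
    have C: "(\<phi> has_derivative (\<lambda>s. Df (x + h *\<^sub>R u + t *\<^sub>R v) (s *\<^sub>R v) - Df (x + t *\<^sub>R v) (s *\<^sub>R v))) (at t)"
      unfolding \<phi>_def by (rule has_derivative_diff[OF A B])
    have "(\<lambda>s. Df (x + h *\<^sub>R u + t *\<^sub>R v) (s *\<^sub>R v) - Df (x + t *\<^sub>R v) (s *\<^sub>R v))
        = (*) (Df (x + h *\<^sub>R u + t *\<^sub>R v) v - Df (x + t *\<^sub>R v) v)"
      using l1 by (auto simp: fun_eq_iff linear_scale algebra_simps)
    with C show ?thesis by (simp add: has_field_derivative_def)
  qed
  obtain \<tau> where \<tau>: "0 < \<tau>" "\<tau> < h"
    and eq: "\<phi> h - \<phi> 0 = (h - 0) * (Df (x + h *\<^sub>R u + \<tau> *\<^sub>R v) v - Df (x + \<tau> *\<^sub>R v) v)"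
    using MVT2[OF h(1) der] by blast
  define a where "a = x + h *\<^sub>R u + \<tau> *\<^sub>R v"
  define b where "b = x + \<tau> *\<^sub>R v"
  have na: "norm (a - x) \<le> h * (norm u + norm v)"
  proof -
    have "norm (a - x) \<le> norm (h *\<^sub>R u) + norm (\<tau> *\<^sub>R v)"
      unfolding a_def by (metis add_diff_cancel_left' add.assoc norm_triangle_ineq)
    also have "\<dots> \<le> h * norm u + h * norm v" using \<tau> h
      by (simp add: mult_right_mono)
    finally show ?thesis by (simp add: algebra_simps)
  qed
  have nb: "norm (b - x) \<le> h * norm v"
    unfolding b_def using \<tau> by (simp add: mult_right_mono)
  have nb2: "h * norm v \<le> h * (norm u + norm v)" using h by simp
  have E1: "\<bar>Df a v - Df x v - Bv (a - x)\<bar> \<le> e * (h * (norm u + norm v))"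
  proof -
    have "norm (a - x) < d" using na h by linarith
    then have "\<bar>Df a v - Df x v - Bv (a - x)\<bar> \<le> e * norm (a - x)" by (rule near)
    also have "\<dots> \<le> e * (h * (norm u + norm v))" using na e by (rule mult_left_mono)
    finally show ?thesis .
  qed
  have E2: "\<bar>Df b v - Df x v - Bv (b - x)\<bar> \<le> e * (h * norm v)"
  proof -
    have "norm (b - x) < d" using nb nb2 h by linarith
    then have "\<bar>Df b v - Df x v - Bv (b - x)\<bar> \<le> e * norm (b - x)" by (rule near)
    also have "\<dots> \<le> e * (h * norm v)" using nb e by (rule mult_left_mono)
    finally show ?thesis .
  qed
  have Bd: "Bv (a - x) - Bv (b - x) = h * Bv u"
    using lin unfolding a_def b_def by (simp add: linear_add linear_scale)
  have "\<bar>Df a v - Df b v - h * Bv u\<bar> \<le> e * (h * (norm u + norm v)) + e * (h * norm v)"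
    using E1 E2 Bd by linarith
  then have K: "\<bar>Df a v - Df b v - h * Bv u\<bar> \<le> e * h * (norm u + 2 * norm v)"
    by (simp add: algebra_simps)
  have "f (x + h *\<^sub>R u + h *\<^sub>R v) - f (x + h *\<^sub>R u) - f (x + h *\<^sub>R v) + f x - h^2 * Bv u
      = h * (Df a v - Df b v - h * Bv u)"
    using eq unfolding \<phi>_def a_def b_def by (simp add: power2_eq_square algebra_simps)
  then have "\<bar>f (x + h *\<^sub>R u + h *\<^sub>R v) - f (x + h *\<^sub>R u) - f (x + h *\<^sub>R v) + f x - h^2 * Bv u\<bar>
      = h * \<bar>Df a v - Df b v - h * Bv u\<bar>" using h by (simp add: abs_mult)
  also have "\<dots> \<le> h * (e * h * (norm u + 2 * norm v))" using K h by simp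
  finally show ?thesis by (simp add: power2_eq_square algebra_simps)
qed

lemma schwarz:
  fixes f :: "'a::real_normed_vector \<Rightarrow> real"
  assumes Df: "\<And>y. (f has_derivative Df y) (at y)"
  and B: "\<And>v. ((\<lambda>y. Df y v) has_derivative (\<lambda>w. B w v)) (at x)"
  shows "B u v = B v u"
proof -
  define c where "c = norm u + norm v"
  have c0: "c \<ge> 0" unfolding c_def by simp
  have "\<bar>B u v - B v u\<bar> \<le> e" if e: "e > 0" for e
  proof -
    define e' where "e' = e / (3 * (c + 1))"
    have e'0: "e' > 0" using e c0 unfolding e'_def by simp
    obtain d1 where d1: "d1 > 0" "\<And>y. norm (y - x) < d1 \<Longrightarrow>
        norm (Df y v - Df x v - B (y - x) v) \<le> e' * norm (y - x)"
      using B[of v] e'0 unfolding has_derivative_at_alt by meson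
    obtain d2 where d2: "d2 > 0" "\<And>y. norm (y - x) < d2 \<Longrightarrow>
        norm (Df y u - Df x u - B (y - x) u) \<le> e' * norm (y - x)"
      using B[of u] e'0 unfolding has_derivative_at_alt by meson
    define h where "h = min d1 d2 / (c + 1)"
    have h0: "h > 0" using d1 d2 c0 unfolding h_def by simp
    have hc: "h * c < min d1 d2"
    proof -
      have "h * c < h * (c + 1)" using h0 by simp
      also have "\<dots> = min d1 d2" unfolding h_def using c0 by simp
      finally show ?thesis .
    qed
    have A1: "\<bar>f (x + h *\<^sub>R u + h *\<^sub>R v) - f (x + h *\<^sub>R u) - f (x + h *\<^sub>R v) + f x - h^2 * B u v\<bar>
          \<le> e' * h^2 * (norm u + 2 * norm v)"
      by (rule schwarz_aux[OF Df, where Bv="\<lambda>w. B w v" and d=d1])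
         (use B[of v] has_derivative_linear d1 h0 hc e'0 c_def in auto)
    have A2: "\<bar>f (x + h *\<^sub>R v + h *\<^sub>R u) - f (x + h *\<^sub>R v) - f (x + h *\<^sub>R u) + f x - h^2 * B v u\<bar>
          \<le> e' * h^2 * (norm v + 2 * norm u)"
      by (rule schwarz_aux[OF Df, where Bv="\<lambda>w. B w u" and d=d2])
         (use B[of u] has_derivative_linear d2 h0 hc e'0 c_def in \<open>auto simp: add.commute\<close>)
    have sw: "x + h *\<^sub>R v + h *\<^sub>R u = x + h *\<^sub>R u + h *\<^sub>R v" by (simp add: algebra_simps)
    have "\<bar>h^2 * B u v - h^2 * B v u\<bar> \<le> e' * h^2 * (norm u + 2 * norm v) + e' * h^2 * (norm v + 2 * norm u)"
      using A1 A2 unfolding sw by linarith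
    also have "\<dots> = h^2 * (3 * e' * c)" by (simp add: c_def algebra_simps)
    finally have "h^2 * \<bar>B u v - B v u\<bar> \<le> h^2 * (3 * e' * c)"
      by (simp add: abs_mult right_diff_distrib[symmetric])
    then have "\<bar>B u v - B v u\<bar> \<le> 3 * e' * c" using h0 by simp
    also have "\<dots> \<le> e"
    proof -
      have "3 * e' * c = e * c / (c + 1)" unfolding e'_def using c0 by (simp add: field_simps)
      also have "\<dots> \<le> e" using c0 e by (simp add: field_simps)
      finally show ?thesis .
    qed
    finally show ?thesis .
  qed
  then have "\<bar>B u v - B v u\<bar> \<le> 0"
    by (metis abs_ge_zero dense not_less)
  then show ?thesis by simp
qed



lemma Aut_sub:
  fixes \<Omega> :: "'a::euclidean_space \<Rightarrow> 'a \<Rightarrow> real"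
  assumes sf: "symplectic_form \<Omega>" and gA: "g \<in> Aut (theta0 \<Omega>)"
  shows "g \<in> Sp \<Omega>"
proof -
  have bi: "bilinear \<Omega>" and alt: "\<And>x. \<Omega> x x = 0" and nd: "\<And>x. (\<forall>y. \<Omega> x y = 0) \<Longrightarrow> x = 0"
    using sf unfolding symplectic_form_def by auto
  have bl: "bounded_bilinear \<Omega>" using bi bilinear_conv_bounded_bilinear by blast
  have linl: "linear (\<lambda>x. \<Omega> x y)" for y using bi unfolding bilinear_def by blast
  have linr: "linear (\<lambda>y. \<Omega> x y)" for x using bi unfolding bilinear_def by blast
  have asym: "\<Omega> a b = - \<Omega> b a" for a b
  proof -
    have "0 = \<Omega> (a + b) (a + b)" using alt by simp
    also have "\<dots> = \<Omega> a a + \<Omega> a b + \<Omega> b a + \<Omega> b b"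
      using bi by (simp add: bilinear_ladd bilinear_radd)
    finally show ?thesis using alt by simp
  qed
  have bij: "bij g" and sm: "smooth_map g" and pb: "pullback g (theta0 \<Omega>) = theta0 \<Omega>"
    using gA unfolding Aut_def diffeomorphism_def by auto
  obtain F :: "nat \<Rightarrow> 'a \<Rightarrow> 'a list \<Rightarrow> 'a" where F0: "\<And>x. F 0 x [] = g x"
    and FD: "\<And>k vs x. length vs = k \<Longrightarrow>
         ((\<lambda>y. F k y vs) has_derivative (\<lambda>v. F (Suc k) x (v # vs))) (at x)"
    using sm unfolding smooth_map_def by blast
  define D where "D z = (\<lambda>v. F 1 z [v])" for z
  define E where "E z u v = F 2 z [u, v]" for z u v
  have dg: "(g has_derivative D z) (at z)" for z
    using FD[of "[]" 0 z] F0 unfolding D_def by (simp add: fun_eq_iff[symmetric])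
  have linD: "linear (D z)" for z using dg has_derivative_linear by blast
  have dD: "((\<lambda>y. D y v) has_derivative (\<lambda>u. E z u v)) (at z)" for z v
    using FD[of "[v]" 1 z] unfolding D_def E_def by (simp add: numeral_2_eq_2)
  have C: "\<Omega> (g z) (D z v) = \<Omega> z v" for z v
  proof -
    have "frechet_derivative g (at z) = D z" using frechet_derivative_at[OF dg] by simp
    moreover have "theta0 \<Omega> (g z) (frechet_derivative g (at z) v) = theta0 \<Omega> z v"
      using fun_cong[OF fun_cong[OF pb, of z], of v] by (simp add: pullback_def)
    ultimately show ?thesis by (simp add: theta0_def)
  qed
  have CC: "\<Omega> (g z) (E z u v) + \<Omega> (D z u) (D z v) = \<Omega> u v" for z u v
  proof -
    have h1: "((\<lambda>y. \<Omega> (g y) (D y v)) has_derivative (\<lambda>h. \<Omega> (g z) (E z h v) + \<Omega> (D z h) (D z v))) (at z)"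
      using bounded_bilinear.FDERIV[OF bl dg dD] by simp
    have h2: "((\<lambda>y. \<Omega> (g y) (D y v)) has_derivative (\<lambda>h. \<Omega> h v)) (at z)"
      using linear_imp_has_derivative[OF linl[of v]] by (simp add: C)
    from has_derivative_unique[OF h1 h2] show ?thesis by (simp add: fun_eq_iff)
  qed
  have ES: "\<Omega> (g z) (E z u v) = \<Omega> (g z) (E z v u)" for z u v
  proof -
    have blr: "bounded_linear (\<lambda>y. \<Omega> (g z) y)" using linr linear_conv_bounded_linear by blast
    show ?thesis
    proof (rule schwarz[where f="\<lambda>y. \<Omega> (g z) (g y)" and Df="\<lambda>y w. \<Omega> (g z) (D y w)"
          and B="\<lambda>w v. \<Omega> (g z) (E z w v)" and x=z])
      show "((\<lambda>y. \<Omega> (g z) (g y)) has_derivative (\<lambda>w. \<Omega> (g z) (D y w))) (at y)" for y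
        by (rule bounded_linear.has_derivative[OF blr dg])
      show "((\<lambda>y. \<Omega> (g z) (D y v)) has_derivative (\<lambda>w. \<Omega> (g z) (E z w v))) (at z)" for v
        by (rule bounded_linear.has_derivative[OF blr dD])
    qed
  qed
  have symp: "\<Omega> (D z u) (D z v) = \<Omega> u v" for z u v
    using CC[of z u v] CC[of z v u] ES[of z u v] asym[of "D z u" "D z v"] asym[of u v] by linarith
  have surjD: "surj (D z)" for z
  proof -
    have "inj (D z)"
      unfolding linear_inj_iff_eq_0[OF linD]
    proof (intro allI impI)
      fix u assume "D z u = 0"
      then have "\<forall>w. \<Omega> u w = 0" using symp[of z u, symmetric] bilinear_lzero[OF bi] by simp
      then show "u = 0" by (rule nd)
    qed
    then show ?thesis using linD linear_injective_imp_surjective by blast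
  qed
  have euler: "g z = D z z" for z
  proof -
    have "\<forall>w. \<Omega> (g z - D z z) w = 0"
    proof
      fix w
      obtain v where v: "w = D z v" using surjD[of z] by (metis surj_def)
      show "\<Omega> (g z - D z z) w = 0"
        unfolding v using C[of z v] symp[of z z v] by (simp add: bilinear_lsub[OF bi])
    qed
    then show ?thesis using nd by fastforce
  qed
  have g0: "g 0 = 0" using euler[of 0] linD[of 0] by (simp add: linear_0)
  have hom: "g (t *\<^sub>R z) = t *\<^sub>R g z" if t: "t > 0" for t z
  proof -
    define ch where "ch t = inverse t *\<^sub>R g (t *\<^sub>R z)" for t
    have vd: "(ch has_vector_derivative 0) (at s within {0<..})" if s: "s \<in> {0<..}" for s
    proof -
      have s0: "s \<noteq> 0" using s by simp
      have "((\<lambda>t. g (t *\<^sub>R z)) has_derivative (\<lambda>r. D (s *\<^sub>R z) (r *\<^sub>R z))) (at s)"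
        by (rule has_derivative_compose[OF _ dg]) (auto intro!: derivative_eq_intros)
      moreover have "(\<lambda>r. D (s *\<^sub>R z) (r *\<^sub>R z)) = (\<lambda>r. r *\<^sub>R D (s *\<^sub>R z) z)"
        using linD by (simp add: fun_eq_iff linear_scale)
      ultimately have d1: "((\<lambda>t. g (t *\<^sub>R z)) has_vector_derivative D (s *\<^sub>R z) z) (at s)"
        by (simp add: has_vector_derivative_def)
      have d2: "((\<lambda>t. inverse t) has_field_derivative - (inverse s ^ Suc (Suc 0))) (at s)"
        by (rule DERIV_inverse[OF s0])
      have "(ch has_vector_derivative (inverse s *\<^sub>R D (s *\<^sub>R z) z + (- (inverse s ^ Suc (Suc 0))) *\<^sub>R g (s *\<^sub>R z))) (at s)"
        unfolding ch_def by (rule has_vector_derivative_scaleR[OF d2 d1])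
      moreover have "g (s *\<^sub>R z) = s *\<^sub>R D (s *\<^sub>R z) z"
        using euler[of "s *\<^sub>R z"] linD by (simp add: linear_scale)
      ultimately have "(ch has_vector_derivative 0) (at s)"
        using s0 by (simp add: power2_eq_square field_simps)
      then show ?thesis by (rule has_vector_derivative_at_within)
    qed
    then obtain c where c: "\<And>s. s \<in> {0<..} \<Longrightarrow> ch s = c"
      using has_vector_derivative_zero_constant[OF _ vd] by (metis convex_real_interval(3))
    have "ch t = ch 1" using c[of t] c[of 1] t by simp
    then have e: "inverse t *\<^sub>R g (t *\<^sub>R z) = g z" unfolding ch_def by simp
    have "g (t *\<^sub>R z) = t *\<^sub>R (inverse t *\<^sub>R g (t *\<^sub>R z))" using t by simp
    then show ?thesis using e by simp
  qed
  have gD: "g z = D 0 z" for z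
  proof -
    have "norm (g z - D 0 z) \<le> e" if e: "e > 0" for e
    proof -
      have nz: "norm z + 1 > 0" using norm_ge_zero[of z] by linarith
      define e' where "e' = e / (norm z + 1)"
      have e'0: "e' > 0" using e unfolding e'_def by (intro divide_pos_pos) (auto intro: add_nonneg_pos)
      obtain d where d: "d > 0" "\<And>y. norm (y - 0) < d \<Longrightarrow>
          norm (g y - g 0 - D 0 (y - 0)) \<le> e' * norm (y - 0)"
        using dg[of 0] e'0 unfolding has_derivative_at_alt by meson
      define t where "t = d / (norm z + 1)"
      have t0: "t > 0" using d unfolding t_def by (intro divide_pos_pos) (auto intro: add_nonneg_pos)
      have "norm (t *\<^sub>R z) < d"
      proof -
        have "norm (t *\<^sub>R z) = t * norm z" using t0 by simp
        also have "\<dots> < t * (norm z + 1)" using t0 by simp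
        also have "\<dots> = d" unfolding t_def using nz by simp
        finally show ?thesis .
      qed
      then have "norm (g (t *\<^sub>R z) - g 0 - D 0 (t *\<^sub>R z)) \<le> e' * norm (t *\<^sub>R z)"
        using d(2)[of "t *\<^sub>R z"] by simp
      then have "norm (t *\<^sub>R (g z - D 0 z)) \<le> e' * (t * norm z)"
        using hom[OF t0] g0 linD[of 0] t0 by (simp add: linear_scale scaleR_diff_right)
      moreover have "norm (t *\<^sub>R (g z - D 0 z)) = t * norm (g z - D 0 z)" using t0 by simp
      ultimately have "t * norm (g z - D 0 z) \<le> t * (e' * norm z)" by (simp add: algebra_simps)
      then have "norm (g z - D 0 z) \<le> e' * norm z" using t0 by simp
      also have "\<dots> \<le> e"
      proof -
        have "e' * norm z = e * norm z / (norm z + 1)" unfolding e'_def by simp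
        also have "\<dots> \<le> e" using e nz by (simp add: field_simps)
        finally show ?thesis .
      qed
      finally show ?thesis .
    qed
    then have "norm (g z - D 0 z) \<le> 0" by (metis dense not_less norm_ge_zero)
    then show ?thesis by simp
  qed
  have "g = D 0" using gD by (simp add: fun_eq_iff)
  then show ?thesis unfolding Sp_def using linD[of 0] bij symp[of 0] by simp
qed

theorem theorem1:
  fixes \<Omega> :: "'a::euclidean_space \<Rightarrow> 'a \<Rightarrow> real"
  assumes "symplectic_form \<Omega>"
  shows "Aut (theta0 \<Omega>) = Sp \<Omega>"
  using Aut_sub[OF assms] Sp_sub by blast

end
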